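(* Let $g \ge 2$, $n \ge 2$, let $(t_1,\ldots,t_n)$ be a generic $n$-tuple of elements of $T$, let $l$ and $q$ be distinct elements of $\{1,\ldots,n\}$, and let $(i,j,k)$ be a permutation of $(1,2,3)$. An element $[\rho] \in S_g(t_1,\ldots,t_n)$ lies in the common vanishing locus of $s^l_{i,j}(c_q)$ and $s^l_{i,k}(c_q)$ if and only if it lies in the common vanishing locus of $s^l_{j,i}(c_q)$ and $s^l_{k,i}(c_q)$.
   Context: Let $\Sigma$ be a compact Riemann surface of genus $g$, $p_1,\ldots,p_n\in\Sigma$ distinct points, and fix the presentation $\pi_1(\Sigma\setminus\{p_1,\ldots,p_n\}) = \langle a_1,\ldots,a_g,b_1,\ldots,b_g,c_1,\ldots,c_n \mid \prod_{i=1}^g[a_i,b_i]=\prod_{j=1}^n c_j\rangle$. Let $G=SU(3)$, $T\subset G$ the diagonal maximal torus. An $n$-tuple $(t_1,\ldots,t_n)$ in $T$ is generic if each $t_j$ has centralizer $T$ in $G$ (distinct eigenvalues) and no product $\lambda_1\cdots\lambda_n$ with $\lambda_i$ an eigenvalue of $t_i$ equals $1$. Let $S_g(t_1,\ldots,t_n) := \{\rho\in\mathrm{Hom}(\pi_1(\Sigma\setminus\{p_1,\ldots,p_n\}),G) \mid \rho(c_i)\sim t_i\ \forall i\}/G$ (conjugation quotient; $\sim$ is conjugacy in $G$), and $V^l_g(t_1,\ldots,t_n) := \{\rho \mid \rho(c_l)=t_l,\ \rho(c_i)\sim t_i\ \forall i\}$, a $T$-bundle over $S_g(t_1,\ldots,t_n)$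 under conjugation; every class $[\rho]$ has a representative in $V^l_g(t_1,\ldots,t_n)$. For $1\le j\le 3$ let $\mathbb{C}_{(j)}$ be the representation of $T$ where $\mathrm{diag}(e^{i\theta_1},e^{i\theta_2},e^{i\theta_3})$ acts by $e^{i\theta_j}$, and $L^l_j := (V^l_g(t_1,\ldots,t_n)\times\mathbb{C}_{(j)})/T$. For $l\in\{1,\ldots,n\}$, $1\le j,k\le 3$ and $i'\in\{1,\ldots,n\}\setminus\{l\}$, the paper defines a section $s^l_{j,k}(c_{i'})$ of $L^l_j$ as follows: for a representative $\rho\in V^l_g(t_1,\ldots,t_n)$ choose $A\in SU(3)$ with $A\rho(c_{i'})A^{-1}=t_{i'}$ (unique up to left multiplication by $T$), and the section takes the value determined by the matrix entry $A_{jk}$. Its zero locus is the set of $[\rho]$ such that, for a representative $\rho\in V^l_g(t_1,\ldots,t_n)$ and such $A$, $A_{jk}=0$; equivalently, the $k$-th coordinate of an eigenvector of $\rho(c_{i'})$ with eigenvalue $(t_{i'})_{jj}$ is zero. *)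

theory Defs
  imports "HOL-Analysis.Analysis"
begin

type_synonym mat3 = "complex^3^3"

definition cadj :: "mat3 \<Rightarrow> mat3" where
  "cadj A = (\<chi> i j. cnj (A $ j $ i))"

definition SU3 :: "mat3 set" where
  "SU3 = {A. A ** cadj A = mat 1 \<and> det A = 1}"

definition torus :: "mat3 set" where
  "torus = {t \<in> SU3. \<forall>i j. i \<noteq> j \<longrightarrow> t $ i $ j = 0}"

definition generic :: "nat \<Rightarrow> (nat \<Rightarrow> mat3) \<Rightarrow> bool" where
  "generic n t \<longleftrightarrow>
     (\<forall>m\<in>{1..n}. t m \<in> torus \<and> (\<forall>i j. i \<noteq> j \<longrightarrow> t m $ i $ i \<noteq> t m $ j $ j)) \<and>
     (\<forall>f :: nat \<Rightarrow> 3. (\<Prod>m\<in>{1..n}. t m $ f m $ f m) \<noteq> 1)"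

fun mprod :: "nat \<Rightarrow> (nat \<Rightarrow> mat3) \<Rightarrow> mat3" where
  "mprod 0 f = mat 1"
| "mprod (Suc m) f = mprod m f ** f (Suc m)"

definition commu :: "mat3 \<Rightarrow> mat3 \<Rightarrow> mat3" where
  "commu a b = a ** b ** matrix_inv a ** matrix_inv b"

text \<open>A representation rho is given by its values (a, b, c) on the generators
  a_1..a_g, b_1..b_g, c_1..c_n; values outside the index ranges are fixed to the identity
  so that such triples correspond bijectively to homomorphisms.\<close>
type_synonym rep = "(nat \<Rightarrow> mat3) \<times> (nat \<Rightarrow> mat3) \<times> (nat \<Rightarrow> mat3)"

definition rA :: "rep \<Rightarrow> nat \<Rightarrow> mat3" where "rA \<rho> = fst \<rho>"
definition rB :: "rep \<Rightarrow> nat \<Rightarrow> mat3" where "rB \<rho> = fst (snd \<rho>)"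
definition rC :: "rep \<Rightarrow> nat \<Rightarrow> mat3" where "rC \<rho> = snd (snd \<rho>)"

definition is_hom :: "nat \<Rightarrow> nat \<Rightarrow> rep \<Rightarrow> bool" where
  "is_hom g n \<rho> \<longleftrightarrow>
     (\<forall>i\<in>{1..g}. rA \<rho> i \<in> SU3 \<and> rB \<rho> i \<in> SU3) \<and> (\<forall>j\<in>{1..n}. rC \<rho> j \<in> SU3) \<and>
     (\<forall>i. i \<notin> {1..g} \<longrightarrow> rA \<rho> i = mat 1 \<and> rB \<rho> i = mat 1) \<and>
     (\<forall>j. j \<notin> {1..n} \<longrightarrow> rC \<rho> j = mat 1) \<and>
     mprod g (\<lambda>i. commu (rA \<rho> i) (rB \<rho> i)) = mprod n (rC \<rho>)"

definition conjugate :: "mat3 \<Rightarrow> mat3 \<Rightarrow> bool" where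
  "conjugate x y \<longleftrightarrow> (\<exists>P\<in>SU3. y = P ** x ** matrix_inv P)"

definition conj_rep :: "mat3 \<Rightarrow> rep \<Rightarrow> rep" where
  "conj_rep P \<rho> = ((\<lambda>i. P ** rA \<rho> i ** matrix_inv P), (\<lambda>i. P ** rB \<rho> i ** matrix_inv P),
                    (\<lambda>i. P ** rC \<rho> i ** matrix_inv P))"

definition Reps :: "nat \<Rightarrow> nat \<Rightarrow> (nat \<Rightarrow> mat3) \<Rightarrow> rep set" where
  "Reps g n t = {\<rho>. is_hom g n \<rho> \<and> (\<forall>m\<in>{1..n}. conjugate (rC \<rho> m) (t m))}"

definition conj_rel :: "nat \<Rightarrow> nat \<Rightarrow> (nat \<Rightarrow> mat3) \<Rightarrow> (rep \<times> rep) set" where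
  "conj_rel g n t = {(\<rho>, \<sigma>). \<rho> \<in> Reps g n t \<and> \<sigma> \<in> Reps g n t \<and> (\<exists>P\<in>SU3. \<sigma> = conj_rep P \<rho>)}"

definition S_g :: "nat \<Rightarrow> nat \<Rightarrow> (nat \<Rightarrow> mat3) \<Rightarrow> rep set set" where
  "S_g g n t = Reps g n t // conj_rel g n t"

definition V_g :: "nat \<Rightarrow> nat \<Rightarrow> nat \<Rightarrow> (nat \<Rightarrow> mat3) \<Rightarrow> rep set" where
  "V_g l g n t = {\<rho> \<in> Reps g n t. rC \<rho> l = t l}"

text \<open>Zero locus in S_g of the section s^l_{j,k}(c_q): classes having a representative
  rho in V^l and A in SU(3) with A rho(c_q) A^{-1} = t_q and A_{jk} = 0.\<close>
definition zero_locus :: "nat \<Rightarrow> nat \<Rightarrow> (nat \<Rightarrow> mat3) \<Rightarrow> nat \<Rightarrow> 3 \<Rightarrow> 3 \<Rightarrow> nat \<Rightarrow> rep set set" where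
  "zero_locus g n t l j k q = {X \<in> S_g g n t. \<exists>\<rho>\<in>X. \<rho> \<in> V_g l g n t \<and>
      (\<exists>A\<in>SU3. A ** rC \<rho> q ** matrix_inv A = t q \<and> A $ j $ k = 0)}"

end

theory Submission
  imports Defs
begin

definition isdiag :: "mat3 \<Rightarrow> bool" where
  "isdiag D \<longleftrightarrow> (\<forall>a b. a \<noteq> b \<longrightarrow> D $ a $ b = 0)"

lemma mult_diag_right:
  assumes "isdiag D"
  shows "(B ** D) $ a $ b = B $ a $ b * D $ b $ b"
proof -
  have "(B ** D) $ a $ b = (\<Sum>m\<in>UNIV. B $ a $ m * D $ m $ b)"
    by (simp add: matrix_matrix_mult_def)
  also have "\<dots> = B $ a $ b * D $ b $ b + (\<Sum>m\<in>UNIV - {b}. B $ a $ m * D $ m $ b)"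
    by (subst sum.remove[of UNIV b]) auto
  also have "(\<Sum>m\<in>UNIV - {b}. B $ a $ m * D $ m $ b) = 0"
    using assms unfolding isdiag_def by (intro sum.neutral) auto
  finally show ?thesis by simp
qed

lemma mult_diag_left:
  assumes "isdiag D"
  shows "(D ** B) $ a $ b = D $ a $ a * B $ a $ b"
proof -
  have "(D ** B) $ a $ b = (\<Sum>m\<in>UNIV. D $ a $ m * B $ m $ b)"
    by (simp add: matrix_matrix_mult_def)
  also have "\<dots> = D $ a $ a * B $ a $ b + (\<Sum>m\<in>UNIV - {a}. D $ a $ m * B $ m $ b)"
    by (subst sum.remove[of UNIV a]) auto
  also have "(\<Sum>m\<in>UNIV - {a}. D $ a $ m * B $ m $ b) = 0"
    using assms unfolding isdiag_def by (intro sum.neutral) auto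
  finally show ?thesis by simp
qed

lemma commute_diag:
  assumes "isdiag D" "\<forall>a b. a \<noteq> b \<longrightarrow> D $ a $ a \<noteq> D $ b $ b" "B ** D = D ** B"
  shows "isdiag B"
  unfolding isdiag_def
proof (intro allI impI)
  fix a b :: 3 assume ab: "a \<noteq> b"
  have "(B ** D) $ a $ b = (D ** B) $ a $ b" using assms(3) by simp
  hence "B $ a $ b * D $ b $ b = D $ a $ a * B $ a $ b"
    using mult_diag_right[OF assms(1)] mult_diag_left[OF assms(1)] by metis
  hence "B $ a $ b * (D $ b $ b - D $ a $ a) = 0" by (simp add: algebra_simps)
  moreover have "D $ b $ b - D $ a $ a \<noteq> 0" using assms(2) ab by auto
  ultimately show "B $ a $ b = 0" by (meson mult_eq_0_iff)
qed

lemma conj_commute: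
  fixes B Bi D :: mat3
  assumes "Bi ** B = mat 1" "B ** D ** Bi = D"
  shows "B ** D = D ** B"
proof -
  have "B ** D = B ** D ** (Bi ** B)" using assms(1) by simp
  also have "\<dots> = (B ** D ** Bi) ** B" by (simp add: matrix_mul_assoc)
  finally show ?thesis using assms(2) by simp
qed

lemma SU3_inv:
  assumes "U \<in> SU3"
  shows "matrix_inv U ** U = mat 1" "U ** matrix_inv U = mat 1"
proof -
  have 1: "U ** cadj U = mat 1" using assms by (simp add: SU3_def)
  hence 2: "cadj U ** U = mat 1" using matrix_left_right_inverse by blast
  have "U ** matrix_inv U = mat 1 \<and> matrix_inv U ** U = mat 1"
    unfolding matrix_inv_def by (rule someI[of _ "cadj U"]) (use 1 2 in simp)
  thus "matrix_inv U ** U = mat 1" "U ** matrix_inv U = mat 1" by simp_all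
qed

lemma univ3:
  assumes "distinct [i, j, k :: 3]"
  shows "UNIV = {i, j, k}"
proof -
  have "card {i,j,k} = 3" using assms by simp
  hence "card {i,j,k} = card (UNIV :: 3 set)" by simp
  thus ?thesis by (metis card_subset_eq finite subset_UNIV)
qed

lemma sum3:
  assumes "distinct [i, j, k :: 3]"
  shows "(\<Sum>m\<in>UNIV. f m) = f i + f j + (f k :: complex)"
  using assms by (simp add: univ3[OF assms] add.assoc)

lemma unit_row_col:
  assumes "A \<in> SU3" "distinct [i, j, k :: 3]"
  shows "(A $ i $ j = 0 \<and> A $ i $ k = 0) \<longleftrightarrow> (A $ j $ i = 0 \<and> A $ k $ i = 0)"
proof -
  have 1: "A ** cadj A = mat 1" using assms by (simp add: SU3_def)
  hence 2: "cadj A ** A = mat 1" using matrix_left_right_inverse by blast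
  have e1: "\<And>a b. (\<Sum>m\<in>UNIV. A $ a $ m * cnj (A $ b $ m)) = (if a = b then 1 else 0)"
  proof -
    fix a b
    have "(A ** cadj A) $ a $ b = (if a = b then 1 else 0)" using 1 by (simp add: mat_def)
    thus "?thesis a b" by (simp add: matrix_matrix_mult_def cadj_def)
  qed
  have e2: "\<And>a b. (\<Sum>m\<in>UNIV. cnj (A $ m $ a) * A $ m $ b) = (if a = b then 1 else 0)"
  proof -
    fix a b
    have "(cadj A ** A) $ a $ b = (if a = b then 1 else 0)" using 2 by (simp add: mat_def)
    thus "?thesis a b" by (simp add: matrix_matrix_mult_def cadj_def)
  qed
  note s = sum3[OF assms(2)]
  have d: "i \<noteq> j" "i \<noteq> k" "j \<noteq> k" using assms(2) by auto
  show ?thesis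
  proof
    assume h: "A $ i $ j = 0 \<and> A $ i $ k = 0"
    have ii: "A $ i $ i * cnj (A $ i $ i) = 1" using e1[of i i] h s by simp
    have "A $ j $ i * cnj (A $ i $ i) = 0" using e1[of j i] h s d by simp
    moreover have "A $ k $ i * cnj (A $ i $ i) = 0"
    proof -
      have "(\<Sum>m\<in>UNIV. A $ k $ m * cnj (A $ i $ m)) = A $ k $ i * cnj (A $ i $ i)"
        using h s by simp
      thus ?thesis using e1[of k i] d by simp
    qed
    ultimately show "A $ j $ i = 0 \<and> A $ k $ i = 0" using ii by auto
  next
    assume h: "A $ j $ i = 0 \<and> A $ k $ i = 0"
    have ii: "cnj (A $ i $ i) * A $ i $ i = 1" using e2[of i i] h s by simp
    have "cnj (A $ i $ i) * A $ i $ j = 0" using e2[of i j] h s d by simp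
    moreover have "cnj (A $ i $ i) * A $ i $ k = 0"
    proof -
      have "(\<Sum>m\<in>UNIV. cnj (A $ m $ i) * A $ m $ k) = cnj (A $ i $ i) * A $ i $ k"
        using h s by simp
      thus ?thesis using e2[of i k] d by simp
    qed
    ultimately show "A $ i $ j = 0 \<and> A $ i $ k = 0" using ii by auto
  qed
qed


lemma cancel_left:
  fixes U Ui :: mat3
  assumes "Ui ** U = mat 1"
  shows "Ui ** (U ** Y) = Y"
  using assms by (metis matrix_mul_assoc matrix_mul_lid)

lemma pattern_invariant:
  assumes gen: "generic n t" and l: "l \<in> {1..n}" and q: "q \<in> {1..n}"
    and X: "X \<in> S_g g n t" and r1: "\<rho>1 \<in> X" and r2: "\<rho>2 \<in> X"
    and l1: "rC \<rho>1 l = t l" and l2: "rC \<rho>2 l = t l"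
    and A1: "A1 \<in> SU3" and A2: "A2 \<in> SU3"
    and q1: "A1 ** rC \<rho>1 q ** matrix_inv A1 = t q"
    and q2: "A2 ** rC \<rho>2 q ** matrix_inv A2 = t q"
    and z: "A1 $ a $ b = 0"
  shows "A2 $ a $ b = 0"
proof -
  obtain \<rho>0 where X0: "X = conj_rel g n t `` {\<rho>0}"
    using X unfolding S_g_def by (auto elim: quotientE)
  obtain P1 where P1: "P1 \<in> SU3" "\<rho>1 = conj_rep P1 \<rho>0"
    using r1 X0 unfolding conj_rel_def by auto
  obtain P2 where P2: "P2 \<in> SU3" "\<rho>2 = conj_rep P2 \<rho>0"
    using r2 X0 unfolding conj_rel_def by auto
  define c where "c = rC \<rho>0 q"
  define d where "d = rC \<rho>0 l"
  define P1i where "P1i = matrix_inv P1"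
  define P2i where "P2i = matrix_inv P2"
  define A1i where "A1i = matrix_inv A1"
  define A2i where "A2i = matrix_inv A2"
  have iP1: "P1i ** P1 = mat 1" "P1 ** P1i = mat 1" using SU3_inv[OF P1(1)] P1i_def by auto
  have iP2: "P2i ** P2 = mat 1" "P2 ** P2i = mat 1" using SU3_inv[OF P2(1)] P2i_def by auto
  have iA1: "A1i ** A1 = mat 1" "A1 ** A1i = mat 1" using SU3_inv[OF A1] A1i_def by auto
  have iA2: "A2i ** A2 = mat 1" "A2 ** A2i = mat 1" using SU3_inv[OF A2] A2i_def by auto
  note canc = cancel_left[OF iP1(1)] cancel_left[OF iP1(2)] cancel_left[OF iP2(1)]
    cancel_left[OF iP2(2)] cancel_left[OF iA1(1)] cancel_left[OF iA1(2)]
    cancel_left[OF iA2(1)] cancel_left[OF iA2(2)]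
  have tl1: "t l = P1 ** (d ** P1i)"
    using l1 P1(2) unfolding d_def P1i_def by (simp add: conj_rep_def rC_def matrix_mul_assoc)
  have tl2: "t l = P2 ** (d ** P2i)"
    using l2 P2(2) unfolding d_def P2i_def by (simp add: conj_rep_def rC_def matrix_mul_assoc)
  have tq1: "t q = A1 ** (P1 ** (c ** (P1i ** A1i)))"
    using q1 P1(2) unfolding c_def P1i_def A1i_def by (simp add: conj_rep_def rC_def matrix_mul_assoc)
  have tq2: "t q = A2 ** (P2 ** (c ** (P2i ** A2i)))"
    using q2 P2(2) unfolding c_def P2i_def A2i_def by (simp add: conj_rep_def rC_def matrix_mul_assoc)
  have tlD: "isdiag (t l)" "\<forall>a b. a \<noteq> b \<longrightarrow> t l $ a $ a \<noteq> t l $ b $ b"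
    using gen l unfolding generic_def torus_def isdiag_def by auto
  have tqD: "isdiag (t q)" "\<forall>a b. a \<noteq> b \<longrightarrow> t q $ a $ a \<noteq> t q $ b $ b"
    using gen q unfolding generic_def torus_def isdiag_def by auto
  define Q where "Q = P2 ** P1i"
  define Qi where "Qi = P1 ** P2i"
  have "Q ** Qi = mat 1" unfolding Q_def Qi_def
    by (simp add: matrix_mul_assoc[symmetric] canc iP1 iP2 iA1 iA2)
  moreover have "Qi ** t l ** Q = t l"
  proof -
    have "Qi ** t l ** Q = Qi ** (P2 ** (d ** P2i)) ** Q" using tl2 by simp
    also have "\<dots> = P1 ** (d ** P1i)" unfolding Q_def Qi_def
      by (simp add: matrix_mul_assoc[symmetric] canc iP1 iP2 iA1 iA2)
    finally show ?thesis using tl1 by simp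
  qed
  ultimately have "Qi ** t l = t l ** Qi" by (rule conj_commute)
  hence Qd: "isdiag Qi" using commute_diag[OF tlD] by simp
  define B where "B = A2 ** (P2 ** (P1i ** A1i))"
  define Bi where "Bi = A1 ** (P1 ** (P2i ** A2i))"
  have "Bi ** B = mat 1" unfolding B_def Bi_def
    by (simp add: matrix_mul_assoc[symmetric] canc iP1 iP2 iA1 iA2)
  moreover have "B ** t q ** Bi = t q"
  proof -
    have "B ** t q ** Bi = B ** (A1 ** (P1 ** (c ** (P1i ** A1i)))) ** Bi" using tq1 by simp
    also have "\<dots> = A2 ** (P2 ** (c ** (P2i ** A2i)))" unfolding B_def Bi_def
      by (simp add: matrix_mul_assoc[symmetric] canc iP1 iP2 iA1 iA2)
    finally show ?thesis using tq2 by simp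
  qed
  ultimately have "B ** t q = t q ** B" by (rule conj_commute)
  hence Bd: "isdiag B" using commute_diag[OF tqD] by simp
  have "A2 = B ** A1 ** Qi" unfolding B_def Qi_def
    by (simp add: matrix_mul_assoc[symmetric] canc iP1 iP2 iA1 iA2)
  hence "A2 $ a $ b = (B ** A1) $ a $ b * Qi $ b $ b" using mult_diag_right[OF Qd] by simp
  also have "\<dots> = B $ a $ a * A1 $ a $ b * Qi $ b $ b" by (simp only: mult_diag_left[OF Bd])
  finally show ?thesis using z by simp
qed

theorem lemma2p5:
  fixes g n l q :: nat and t :: "nat \<Rightarrow> mat3" and i j k :: 3 and X :: "rep set"
  assumes "g \<ge> 2" and "n \<ge> 2" and "generic n t"
    and "l \<in> {1..n}" and "q \<in> {1..n}" and "l \<noteq> q"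
    and "distinct [i, j, k]"
    and "X \<in> S_g g n t"
  shows "(X \<in> zero_locus g n t l i j q \<and> X \<in> zero_locus g n t l i k q) \<longleftrightarrow>
         (X \<in> zero_locus g n t l j i q \<and> X \<in> zero_locus g n t l k i q)"
proof
  assume "X \<in> zero_locus g n t l i j q \<and> X \<in> zero_locus g n t l i k q"
  then obtain \<rho>1 A1 \<rho>2 A2 where r1: "\<rho>1 \<in> X" "\<rho>1 \<in> V_g l g n t" "A1 \<in> SU3"
      "A1 ** rC \<rho>1 q ** matrix_inv A1 = t q" "A1 $ i $ j = 0"
    and r2: "\<rho>2 \<in> X" "\<rho>2 \<in> V_g l g n t" "A2 \<in> SU3"
      "A2 ** rC \<rho>2 q ** matrix_inv A2 = t q" "A2 $ i $ k = 0"
    unfolding zero_locus_def by blast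
  have "A1 $ i $ k = 0"
    using pattern_invariant[OF assms(3,4,5,8) r2(1) r1(1) _ _ r2(3) r1(3) r2(4) r1(4) r2(5)]
      r1(2) r2(2) unfolding V_g_def by auto
  hence "A1 $ j $ i = 0 \<and> A1 $ k $ i = 0" using unit_row_col[OF r1(3) assms(7)] r1(5) by simp
  thus "X \<in> zero_locus g n t l j i q \<and> X \<in> zero_locus g n t l k i q"
    using r1 assms(8) unfolding zero_locus_def by blast
next
  assume "X \<in> zero_locus g n t l j i q \<and> X \<in> zero_locus g n t l k i q"
  then obtain \<rho>1 A1 \<rho>2 A2 where r1: "\<rho>1 \<in> X" "\<rho>1 \<in> V_g l g n t" "A1 \<in> SU3"
      "A1 ** rC \<rho>1 q ** matrix_inv A1 = t q" "A1 $ j $ i = 0"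
    and r2: "\<rho>2 \<in> X" "\<rho>2 \<in> V_g l g n t" "A2 \<in> SU3"
      "A2 ** rC \<rho>2 q ** matrix_inv A2 = t q" "A2 $ k $ i = 0"
    unfolding zero_locus_def by blast
  have "A1 $ k $ i = 0"
    using pattern_invariant[OF assms(3,4,5,8) r2(1) r1(1) _ _ r2(3) r1(3) r2(4) r1(4) r2(5)]
      r1(2) r2(2) unfolding V_g_def by auto
  hence "A1 $ i $ j = 0 \<and> A1 $ i $ k = 0" using unit_row_col[OF r1(3) assms(7)] r1(5) by simp
  thus "X \<in> zero_locus g n t l i j q \<and> X \<in> zero_locus g n t l i k q"
    using r1 assms(8) unfolding zero_locus_def by blast
qed

end
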